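(* Let $\alpha\in(0,1]$ and let $d\ge 144/\alpha^2$. Let $G$ be a bipartite $d$-regular graph with parts $V_1,V_2$, $|V_1|=|V_2|=n$, such that for all nonempty $A\subseteq V_1$ and $B\subseteq V_2$, $\bigl|e(A,B)-\tfrac{d}{n}|A||B|\bigr|<\lambda\sqrt{|A||B|}$ with $\lambda=2\sqrt{d-1}$. Suppose $U\subseteq V_1$ and $W\subseteq V_2$ satisfy $|U|=|W|=\alpha n$, $\deg(w,U)\ge\alpha d/3$ for every $w\in W$ and $\deg(u,W)\ge\alpha d/3$ for every $u\in U$. Then $G[U,W]$ contains a perfect matching.
   Context: $e(A,B)$ is the number of edges between $A$ and $B$; $\deg(v,S)$ is the number of neighbours of $v$ in $S$; $G[U,W]$ is the bipartite subgraph of $G$ induced between $U$ and $W$. *)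

theory Defs
  imports Complex_Main
begin

definition edges_between :: "('a \<Rightarrow> 'a \<Rightarrow> bool) \<Rightarrow> 'a set \<Rightarrow> 'a set \<Rightarrow> nat" where
  "edges_between E A B = card {(a, b). a \<in> A \<and> b \<in> B \<and> E a b}"

definition deg_in :: "('a \<Rightarrow> 'a \<Rightarrow> bool) \<Rightarrow> 'a \<Rightarrow> 'a set \<Rightarrow> nat" where
  "deg_in E v S = card {u \<in> S. E v u}"

definition bipartite_regular :: "('a \<Rightarrow> 'a \<Rightarrow> bool) \<Rightarrow> 'a set \<Rightarrow> 'a set \<Rightarrow> nat \<Rightarrow> bool" where
  "bipartite_regular E V1 V2 d \<longleftrightarrow>
     finite V1 \<and> finite V2 \<and> V1 \<inter> V2 = {} \<and>
     (\<forall>x y. E x y \<longrightarrow> E y x) \<and>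
     (\<forall>x y. E x y \<longrightarrow> (x \<in> V1 \<and> y \<in> V2) \<or> (x \<in> V2 \<and> y \<in> V1)) \<and>
     (\<forall>v \<in> V1 \<union> V2. deg_in E v (V1 \<union> V2) = d)"

definition has_perfect_matching :: "('a \<Rightarrow> 'a \<Rightarrow> bool) \<Rightarrow> 'a set \<Rightarrow> 'a set \<Rightarrow> bool" where
  "has_perfect_matching E U W \<longleftrightarrow>
     (\<exists>M. M \<subseteq> {(u, w). u \<in> U \<and> w \<in> W \<and> E u w} \<and>
          (\<forall>u \<in> U. \<exists>!w. (u, w) \<in> M) \<and>
          (\<forall>w \<in> W. \<exists>!u. (u, w) \<in> M))"

end

theory Submission imports Defs begin

lemma hall:
  assumes "finite X" "finite I" "\<forall>i\<in>I. A i \<subseteq> X"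
    "\<forall>K\<subseteq>I. card K \<le> card (\<Union>(A ` K))"
  shows "\<exists>f. inj_on f I \<and> (\<forall>i\<in>I. f i \<in> A i)"
  using assms
proof (induction "card I" arbitrary: I A rule: less_induct)
  case less
  note fX = less.prems(1) and fI = less.prems(2) and AX = less.prems(3) and H = less.prems(4)
  show ?case
  proof (cases "I = {}")
    case True then show ?thesis by auto
  next
    case Ine: False
    show ?thesis
    proof (cases "\<exists>K. K \<subseteq> I \<and> K \<noteq> {} \<and> K \<noteq> I \<and> card (\<Union>(A ` K)) = card K")
      case True
      then obtain K where K: "K \<subseteq> I" "K \<noteq> {}" "K \<noteq> I" "card (\<Union>(A ` K)) = card K" by blast
      have cK: "card K < card I" using K fI by (meson psubsetI psubset_card_mono)
      have fK: "finite K" using K fI finite_subset by blast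
      have h1: "\<forall>i\<in>K. A i \<subseteq> X" using AX K(1) by blast
      have h2: "\<forall>K'\<subseteq>K. card K' \<le> card (\<Union>(A ` K'))" using H K(1) by blast
      obtain f1 where f1: "inj_on f1 K" "\<forall>i\<in>K. f1 i \<in> A i"
        using less.hyps[OF cK fX fK h1 h2] by (elim exE conjE) blast
      define B where "B i = A i - \<Union>(A ` K)" for i
      have cIK: "card (I - K) < card I" 
      proof -
        have "card K > 0" using fK K(2) by auto
        then show ?thesis using card_Diff_subset[OF fK K(1)] cK by linarith
      qed
      have fIK: "finite (I - K)" using fI by simp
      have BX: "\<forall>i\<in>I - K. B i \<subseteq> X" using AX B_def by auto
      have HB: "\<forall>L\<subseteq>I - K. card L \<le> card (\<Union>(B ` L))"
      proof (intro allI impI)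
        fix L assume L: "L \<subseteq> I - K"
        have fL: "finite L" using L fIK finite_subset by blast
        have u: "\<Union>(A ` (L \<union> K)) = \<Union>(B ` L) \<union> \<Union>(A ` K)" unfolding B_def by auto
        have dj: "\<Union>(B ` L) \<inter> \<Union>(A ` K) = {}" unfolding B_def by auto
        have fin1: "finite (\<Union>(B ` L))" using fX BX L
          by (meson UN_least finite_subset subset_iff)
        have fin2: "finite (\<Union>(A ` K))" using fX AX K
          by (meson UN_least finite_subset subset_iff)
        have c1: "card (\<Union>(A ` (L \<union> K))) = card (\<Union>(B ` L)) + card K"
          using u dj fin1 fin2 K(4) card_Un_disjoint by metis
        have c2: "card (L \<union> K) = card L + card K"
          using L fL fK by (subst card_Un_disjoint) auto
        have "L \<union> K \<subseteq> I" using L K by blast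
        then have "card (L \<union> K) \<le> card (\<Union>(A ` (L \<union> K)))" using H by blast
        then show "card L \<le> card (\<Union>(B ` L))" using c1 c2 by simp
      qed
      obtain f2 where f2: "inj_on f2 (I - K)" "\<forall>i\<in>I - K. f2 i \<in> B i"
        using less.hyps[OF cIK fX fIK BX HB] by (elim exE conjE) blast
      define f where "f i = (if i \<in> K then f1 i else f2 i)" for i
      have "inj_on f I"
      proof (rule inj_onI)
        fix i j assume ij: "i \<in> I" "j \<in> I" "f i = f j"
        show "i = j"
        proof (cases "i \<in> K"; cases "j \<in> K")
          assume "i \<in> K" "j \<in> K" then show ?thesis using ij f1 f_def by (simp add: inj_on_def)
        next
          assume "i \<notin> K" "j \<notin> K" then show ?thesis using ij f2 f_def by (simp add: inj_on_def)
        next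
          assume a: "i \<in> K" "j \<notin> K"
          then have "f i \<in> \<Union>(A ` K)" "f j \<notin> \<Union>(A ` K)" using f1 f2 ij f_def B_def by auto
          then show ?thesis using ij by simp
        next
          assume a: "i \<notin> K" "j \<in> K"
          have "f j \<in> \<Union>(A ` K)" using a f1 f_def by auto
          moreover have "f i \<notin> \<Union>(A ` K)" using a ij(1) f2(2) f_def B_def by auto
          ultimately show ?thesis using ij by simp
        qed
      qed
      moreover have "\<forall>i\<in>I. f i \<in> A i" using f1 f2 f_def B_def by auto
      ultimately show ?thesis by blast
    next
      case False
      have Hs: "\<And>K. K \<subseteq> I \<Longrightarrow> K \<noteq> {} \<Longrightarrow> K \<noteq> I \<Longrightarrow> card K < card (\<Union>(A ` K))"
        proof -
          fix K assume K: "K \<subseteq> I" "K \<noteq> {}" "K \<noteq> I"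
          have "card K \<le> card (\<Union>(A ` K))" using H K(1) by blast
          moreover have "card (\<Union>(A ` K)) \<noteq> card K" using False K by blast
          ultimately show "card K < card (\<Union>(A ` K))" by linarith
        qed
      obtain i0 where i0: "i0 \<in> I" using Ine by blast
      have "card {i0} \<le> card (\<Union>(A ` {i0}))" using H i0 by blast
      then have "card {i0} \<le> card (A i0)" by simp
      then have "A i0 \<noteq> {}" by auto
      then obtain x where x: "x \<in> A i0" by blast
      define B where "B i = A i - {x}" for i
      have cI: "card (I - {i0}) < card I" by (rule card_Diff1_less[OF fI i0])
      have fI': "finite (I - {i0})" using fI by simp
      have BX: "\<forall>i\<in>I - {i0}. B i \<subseteq> X" using AX B_def by auto
      have HB: "\<forall>L\<subseteq>I - {i0}. card L \<le> card (\<Union>(B ` L))"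
      proof (intro allI impI)
        fix L assume L: "L \<subseteq> I - {i0}"
        show "card L \<le> card (\<Union>(B ` L))"
        proof (cases "L = {}")
          case True then show ?thesis by simp
        next
          case False
          have "L \<noteq> I" using L i0 by auto
          then have lt: "card L < card (\<Union>(A ` L))" using Hs L False by auto
          have e: "\<Union>(B ` L) = \<Union>(A ` L) - {x}" unfolding B_def by auto
          have fin2: "finite (\<Union>(A ` L))" using fX AX L
            by (meson UN_least finite_subset subset_iff DiffD1)
          have "card (\<Union>(A ` L)) - 1 \<le> card (\<Union>(A ` L) - {x})"
            using fin2 by (simp add: card_Diff_singleton_if)
          then show ?thesis using lt e by simp
        qed
      qed
      obtain f2 where f2: "inj_on f2 (I - {i0})" "\<forall>i\<in>I - {i0}. f2 i \<in> B i"
        using less.hyps[OF cI fX fI' BX HB] by (elim exE conjE) blast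
      define f where "f i = (if i = i0 then x else f2 i)" for i
      have "inj_on f I"
      proof (rule inj_onI)
        fix i j assume ij: "i \<in> I" "j \<in> I" "f i = f j"
        show "i = j"
        proof (cases "i = i0"; cases "j = i0")
          assume "i \<noteq> i0" "j \<noteq> i0" then show ?thesis using ij f2 f_def by (simp add: inj_on_def)
        next
          assume "i = i0" "j \<noteq> i0" then show ?thesis using ij f2 f_def B_def by force
        next
          assume "i \<noteq> i0" "j = i0" then show ?thesis using ij f2 f_def B_def by force
        qed simp
      qed
      moreover have "\<forall>i\<in>I. f i \<in> A i" using f2 f_def B_def x by auto
      ultimately show ?thesis by blast
    qed
  qed
qed



lemma contra1:
  fixes n d s t e L m :: real
  assumes "0 < n" "0 \<le> t" "t \<le> s" "s \<le> m/6" "m = \<alpha>*n" "e \<ge> s*\<alpha>*d/3"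
    "e < d/n*s*t + L*sqrt(s*t)" "0 \<le> L" "L \<le> \<alpha>*d/6" "0 \<le> d" "0 < s"
  shows False
proof -
  have q: "sqrt (s*t) \<le> s"
  proof -
    have "sqrt (s*t) \<le> sqrt (s*s)" using assms by (intro real_sqrt_le_mono mult_left_mono) auto
    also have "\<dots> = s" using assms by simp
    finally show ?thesis .
  qed
  have "d/n*s*t \<le> d/n*s*s" using assms by (intro mult_left_mono) auto
  also have "\<dots> \<le> d/n*s*(\<alpha>*n/6)" using assms by (intro mult_left_mono) auto
  also have "\<dots> = s*\<alpha>*d/6" using assms by (simp add: field_simps)
  finally have a: "d/n*s*t \<le> s*\<alpha>*d/6" .
  have "L*sqrt(s*t) \<le> L*s" using q assms by (intro mult_left_mono) auto
  also have "\<dots> \<le> \<alpha>*d/6*s" using assms by (intro mult_right_mono) auto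
  finally have b: "L*sqrt(s*t) \<le> \<alpha>*d/6*s" .
  have c: "\<alpha>*d/6*s = s*\<alpha>*d/6" "s*\<alpha>*d/6 + s*\<alpha>*d/6 = s*\<alpha>*d/3" by (simp_all add: field_simps)
  show False using a b c assms(6,7) by linarith
qed

lemma contra2:
  fixes n d a b L m \<alpha> :: real
  assumes "0 < n" "0 < d" "a > m/6" "b > m/6" "m = \<alpha>*n" "0 < \<alpha>"
    "d/n*a*b < L*sqrt(a*b)" "L \<le> \<alpha>*d/6"
  shows False
proof -
  define q where "q = sqrt (a*b)"
  have m0: "m/6 > 0" using assms(1,5,6) by simp
  have a0: "a > 0" "b > 0" using assms m0 by linarith+
  have "(m/6)*(m/6) < a*b" using assms m0 a0 by (intro mult_strict_mono) auto
  then have "sqrt ((m/6)^2) < q" unfolding q_def by (simp add: power2_eq_square)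
  then have qg: "m/6 < q" using m0 by simp
  have qq: "q*q = a*b" unfolding q_def using a0 by simp
  have "d/n*q*q < L*q" using assms qq by (simp add: q_def mult.assoc)
  then have "d/n*q < L" using qg m0 mult_right_less_imp_less[of "d/n*q" q L] by simp
  moreover have "d/n*(m/6) < d/n*q" using qg assms by (intro mult_strict_left_mono) auto
  moreover have "d/n*(m/6) = \<alpha>*d/6" using assms by (simp add: field_simps)
  ultimately show False using assms by linarith
qed



lemma card_pairs:
  assumes "finite A" "finite B"
  shows "card {(a, b). a \<in> A \<and> b \<in> B \<and> E a b} = (\<Sum>a\<in>A. card {b \<in> B. E a b})"
proof -
  have "{(a, b). a \<in> A \<and> b \<in> B \<and> E a b} = Sigma A (\<lambda>a. {b \<in> B. E a b})" by auto
  then show ?thesis using assms by (simp add: card_SigmaI)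
qed

lemma card_pairs_swap:
  assumes "\<forall>x y. E x y \<longrightarrow> E y x"
  shows "card {(a, b). a \<in> A \<and> b \<in> B \<and> E a b} = card {(b, a). b \<in> B \<and> a \<in> A \<and> E b a}"
proof -
  have "{(b, a). b \<in> B \<and> a \<in> A \<and> E b a} = prod.swap ` {(a, b). a \<in> A \<and> b \<in> B \<and> E a b}"
    using assms by auto
  moreover have "inj_on prod.swap X" for X :: "('a \<times> 'a) set" by (rule inj_swap)
  ultimately show ?thesis by (simp add: card_image)
qed

theorem proposition3p11:
  fixes E :: "'a \<Rightarrow> 'a \<Rightarrow> bool" and V1 V2 U W :: "'a set"
    and n d :: nat and \<alpha> :: real
  assumes alpha: "0 < \<alpha>" "\<alpha> \<le> 1"
    and d_ge: "real d \<ge> 144 / \<alpha>\<^sup>2"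
    and G: "bipartite_regular E V1 V2 d"
    and sizes: "card V1 = n" "card V2 = n"
    and expander: "\<And>A B. A \<subseteq> V1 \<Longrightarrow> B \<subseteq> V2 \<Longrightarrow> A \<noteq> {} \<Longrightarrow> B \<noteq> {} \<Longrightarrow>
       \<bar>real (edges_between E A B) - real d / real n * real (card A) * real (card B)\<bar>
         < 2 * sqrt (real d - 1) * sqrt (real (card A) * real (card B))"
    and UW: "U \<subseteq> V1" "W \<subseteq> V2"
    and card_UW: "real (card U) = \<alpha> * real n" "real (card W) = \<alpha> * real n"
    and degW: "\<And>w. w \<in> W \<Longrightarrow> real (deg_in E w U) \<ge> \<alpha> * real d / 3"
    and degU: "\<And>u. u \<in> U \<Longrightarrow> real (deg_in E u W) \<ge> \<alpha> * real d / 3"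
  shows "has_perfect_matching E U W"
proof -
  have fV1: "finite V1" and fV2: "finite V2" and symE: "\<forall>x y. E x y \<longrightarrow> E y x"
    using G unfolding bipartite_regular_def by auto
  have fU: "finite U" using fV1 UW(1) finite_subset by blast
  have fW: "finite W" using fV2 UW(2) finite_subset by blast
  have cUW: "card U = card W" using card_UW by simp
  show ?thesis
  proof (cases "n = 0")
    case True
    then have "U = {}" "W = {}" using card_UW fU fW by auto
    then show ?thesis unfolding has_perfect_matching_def by auto
  next
    case False
    then have npos: "real n > 0" by simp
    define m where "m = \<alpha> * real n"
    have a2: "\<alpha>\<^sup>2 > 0" using alpha by simp
    have a2d: "\<alpha>\<^sup>2 * real d \<ge> 144" using d_ge a2 by (simp add: divide_le_eq mult.commute)
    have a21: "\<alpha>\<^sup>2 \<le> 1" using alpha by (simp add: power_le_one)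
    have d144: "real d \<ge> 144"
    proof -
      have "144 \<le> \<alpha>\<^sup>2 * real d" by (rule a2d)
      also have "\<dots> \<le> 1 * real d" using a21 by (intro mult_right_mono) auto
      finally show ?thesis by simp
    qed
    have lam: "2 * sqrt (real d - 1) \<le> \<alpha> * real d / 6"
    proof -
      have "sqrt (real d - 1) \<le> sqrt (real d)" by simp
      have "144 * real d \<le> (\<alpha>\<^sup>2 * real d) * real d" using a2d by (intro mult_right_mono) auto
      then have "sqrt (144 * real d) \<le> sqrt ((\<alpha> * real d)\<^sup>2)"
        by (intro real_sqrt_le_mono) (simp add: power2_eq_square algebra_simps)
      then have "12 * sqrt (real d) \<le> \<alpha> * real d" using alpha by (simp add: real_sqrt_mult)
      then show ?thesis using \<open>sqrt (real d - 1) \<le> sqrt (real d)\<close> by linarith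
    qed
    define L where "L = 2 * sqrt (real d - 1)"
    have L0: "0 \<le> L" using d144 L_def by simp
    define A where "A u = {w \<in> W. E u w}" for u
    have hallc: "\<forall>S\<subseteq>U. card S \<le> card (\<Union>(A ` S))"
    proof (intro allI impI, rule ccontr)
      fix S assume SU: "S \<subseteq> U" and lt: "\<not> card S \<le> card (\<Union>(A ` S))"
      define N where "N = \<Union>(A ` S)"
      have NW: "N \<subseteq> W" unfolding N_def A_def by auto
      have fS: "finite S" using fU SU finite_subset by blast
      have fN: "finite N" using fW NW finite_subset by blast
      have tls: "card N < card S" using lt N_def by simp
      have sU: "card S \<le> card U" using card_mono[OF fU SU] .
      have cWN: "card (W - N) = card W - card N" using card_Diff_subset[OF fN NW] .
      have cUS: "card (U - S) = card U - card S" using card_Diff_subset[OF fS SU] .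
      have cm: "real (card U) = m" "real (card W) = m" using card_UW m_def by auto
      have spos: "card S > 0" using tls by simp
      have e1: "real (edges_between E S N) \<ge> real (card S) * \<alpha> * real d / 3"
      proof -
        have "edges_between E S N = (\<Sum>a\<in>S. card {b \<in> N. E a b})"
          unfolding edges_between_def using fS fN by (rule card_pairs)
        also have "\<dots> = (\<Sum>a\<in>S. deg_in E a W)"
        proof (rule sum.cong)
          fix a assume "a \<in> S"
          then have "{b \<in> N. E a b} = {b \<in> W. E a b}" using NW unfolding N_def A_def by auto
          then show "card {b \<in> N. E a b} = deg_in E a W" unfolding deg_in_def by simp
        qed simp
        finally have "real (edges_between E S N) = (\<Sum>a\<in>S. real (deg_in E a W))" by simp
        also have "\<dots> \<ge> (\<Sum>a\<in>S. \<alpha> * real d / 3)" using degU SU by (intro sum_mono) auto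
        finally show ?thesis by simp
      qed
      have e2: "real (edges_between E (U - S) (W - N)) \<ge> real (card (W - N)) * \<alpha> * real d / 3"
      proof -
        have "edges_between E (U - S) (W - N) = card {(b, a). b \<in> W - N \<and> a \<in> U - S \<and> E b a}"
          unfolding edges_between_def using symE by (rule card_pairs_swap)
        also have "\<dots> = (\<Sum>b\<in>W - N. card {a \<in> U - S. E b a})"
          using fU fW by (intro card_pairs) auto
        also have "\<dots> = (\<Sum>b\<in>W - N. deg_in E b U)"
        proof (rule sum.cong)
          fix b assume b: "b \<in> W - N"
          have "{a \<in> U - S. E b a} = {a \<in> U. E b a}"
          proof (intro equalityI subsetI)
            fix a assume a: "a \<in> {a \<in> U. E b a}"
            have "a \<notin> S"
            proof
              assume "a \<in> S"
              then have "b \<in> N" using a b symE unfolding N_def A_def by auto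
              then show False using b by simp
            qed
            then show "a \<in> {a \<in> U - S. E b a}" using a by simp
          qed auto
          then show "card {a \<in> U - S. E b a} = deg_in E b U" unfolding deg_in_def by simp
        qed simp
        finally have "real (edges_between E (U - S) (W - N)) = (\<Sum>b\<in>W - N. real (deg_in E b U))" by simp
        also have "\<dots> \<ge> (\<Sum>b\<in>W - N. \<alpha> * real d / 3)" using degW by (intro sum_mono) auto
        finally show ?thesis by simp
      qed
      have e3: "edges_between E S (W - N) = 0"
      proof -
        have emp: "{(a, b). a \<in> S \<and> b \<in> W - N \<and> E a b} = {}" unfolding N_def A_def by auto
        show ?thesis unfolding edges_between_def emp by simp
      qed
      have adpos: "\<alpha> * real d / 3 > 0" using alpha d144 by simp
      have dpos: "real d > 0" using d144 by simp
      consider "real (card S) \<le> m/6" | "real (card (W - N)) \<le> m/6"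
        | "real (card S) > m/6" "real (card (W - N)) > m/6" by linarith
      then show False
      proof cases
        case 1
        have "real (edges_between E S N) > 0" proof -
          have "real (card S) * \<alpha> * real d / 3 > 0" using spos alpha dpos by simp
          then show ?thesis using e1 by linarith
        qed
        then have "N \<noteq> {}" unfolding edges_between_def by auto
        moreover have "S \<noteq> {}" using spos by auto
        ultimately have ex: "\<bar>real (edges_between E S N) - real d / real n * real (card S) * real (card N)\<bar>
          < L * sqrt (real (card S) * real (card N))"
          using expander[of S N] SU NW UW L_def by auto
        have ex1: "real (edges_between E S N) < real d / real n * real (card S) * real (card N)
          + L * sqrt (real (card S) * real (card N))"
          using ex by (simp only: abs_less_iff) linarith
        show False
          by (rule contra1[OF npos _ _ 1 m_def e1 ex1 L0 lam[folded L_def]])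
             (use tls spos dpos in auto)
      next
        case 2
        have wpos: "card (W - N) > 0" using cWN tls sU cUW by simp
        have "real (edges_between E (U - S) (W - N)) > 0" proof -
          have "real (card (W - N)) * \<alpha> * real d / 3 > 0" using wpos alpha dpos by simp
          then show ?thesis using e2 by linarith
        qed
        then have "U - S \<noteq> {}"
        proof (intro notI)
          assume pos: "real (edges_between E (U - S) (W - N)) > 0" and h: "U - S = {}"
          have "edges_between E (U - S) (W - N) = 0" unfolding edges_between_def h by simp
          then show False using pos by simp
        qed
        moreover have "W - N \<noteq> {}" using wpos by (metis card.empty less_irrefl)
        ultimately have ex: "\<bar>real (edges_between E (U - S) (W - N)) - real d / real n * real (card (U - S)) * real (card (W - N))\<bar>
          < L * sqrt (real (card (U - S)) * real (card (W - N)))"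
          using expander[of "U - S" "W - N"] SU NW UW L_def by auto
        have le: "card (U - S) \<le> card (W - N)" using cUS cWN tls cUW by simp
        have ex2: "real (edges_between E (U - S) (W - N)) < real d / real n * real (card (W - N)) * real (card (U - S))
          + L * sqrt (real (card (W - N)) * real (card (U - S)))"
        proof -
          have c1: "real d / real n * real (card (W - N)) * real (card (U - S)) = real d / real n * real (card (U - S)) * real (card (W - N))" by simp
          have c2: "real (card (W - N)) * real (card (U - S)) = real (card (U - S)) * real (card (W - N))" by simp
          show ?thesis using ex unfolding c1 c2 by (simp only: abs_less_iff) linarith
        qed
        show False
          by (rule contra1[OF npos _ _ 2 m_def e2 ex2 L0 lam[folded L_def]])
             (use le wpos dpos in auto)
      next
        case 3
        have "S \<noteq> {}" using spos by auto
        moreover have "W - N \<noteq> {}"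
        proof -
          have "m / 6 > 0" using m_def alpha npos by simp
          then have "card (W - N) > 0" using 3 by simp
          then show ?thesis by (metis card.empty less_irrefl)
        qed
        ultimately have ex: "\<bar>real (edges_between E S (W - N)) - real d / real n * real (card S) * real (card (W - N))\<bar>
          < L * sqrt (real (card S) * real (card (W - N)))"
          using expander[of S "W - N"] SU UW L_def by auto
        then have ex2: "real d / real n * real (card S) * real (card (W - N))
          < L * sqrt (real (card S) * real (card (W - N)))" using e3 by simp
        show False
          by (rule contra2[OF npos dpos 3 m_def alpha(1) ex2 lam[folded L_def]])
      qed
    qed
    have AW: "\<forall>u\<in>U. A u \<subseteq> W" unfolding A_def by auto
    obtain f where f: "inj_on f U" "\<forall>u\<in>U. f u \<in> A u"
      using hall[OF fW fU AW hallc] by blast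
    have fUW: "f ` U \<subseteq> W" using f(2) unfolding A_def by auto
    have "card (f ` U) = card W" using card_image[OF f(1)] cUW by simp
    then have fUeq: "f ` U = W" using card_subset_eq[OF fW fUW] by simp
    define M where "M = (\<lambda>u. (u, f u)) ` U"
    show ?thesis unfolding has_perfect_matching_def
    proof (intro exI conjI ballI)
      show "M \<subseteq> {(u, w). u \<in> U \<and> w \<in> W \<and> E u w}" using f(2) unfolding M_def A_def by auto
    next
      fix u assume "u \<in> U"
      then show "\<exists>!w. (u, w) \<in> M" unfolding M_def by auto
    next
      fix w assume "w \<in> W"
      then obtain u where u: "u \<in> U" "w = f u" using fUeq by blast
      show "\<exists>!u. (u, w) \<in> M"
      proof (rule ex1I[of _ u])
        show "(u, w) \<in> M" using u unfolding M_def by auto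
      next
        fix v assume "(v, w) \<in> M"
        then have "v \<in> U" "w = f v" unfolding M_def by auto
        then show "v = u" using u f(1) by (simp add: inj_on_def)
      qed
    qed
  qed
qed

end
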